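(* Let $n\ge 2$. Every matrix in the interior of the cone $\mathcal{CP}_n$ (interior taken in the space $\mathcal S_n$ of real symmetric $n\times n$ matrices) has infinitely many CP factorizations.
   Context: A symmetric $n\times n$ matrix $A$ is completely positive if $A=BB^T$ for some entrywise nonnegative $n\times k$ matrix $B$; such an equality is a CP factorization of $A$. $\mathcal{CP}_n$ denotes the convex cone of $n\times n$ completely positive matrices. Only CP factorizations in which the columns of $B$ are pairwise linearly independent are considered, and two CP factorizations $A=BB^T=CC^T$ are considered equal if $C=BP$ for a permutation matrix $P$. (Known fact, which may be used: the interior of $\mathcal{CP}_n$ consists exactly of the nonsingular matrices $A$ having a CP factorization $A=BB^T$ in which at least one column of $B$ is entrywise positive.) *)

theory Defs
  imports "HOL-Analysis.Analysis" "HOL-Library.Multiset"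
begin

text \<open>An n x k matrix B is represented by the list of its k columns (each in real^n);
  B B^T is then the sum of the outer products of the columns.\<close>

definition outer :: "real^'n \<Rightarrow> real^'n^'n" where
  "outer b = (\<chi> i j. b$i * b$j)"

definition gram :: "(real^'n) list \<Rightarrow> real^'n^'n" where
  "gram cols = sum_list (map outer cols)"

definition nonneg_vec :: "real^'n \<Rightarrow> bool" where
  "nonneg_vec b \<longleftrightarrow> (\<forall>i. b$i \<ge> 0)"

definition lin_indep_pair :: "real^'n \<Rightarrow> real^'n \<Rightarrow> bool" where
  "lin_indep_pair u v \<longleftrightarrow> (\<forall>a b::real. a *\<^sub>R u + b *\<^sub>R v = 0 \<longrightarrow> a = 0 \<and> b = 0)"

definition cp_factorization :: "real^'n^'n \<Rightarrow> (real^'n) list \<Rightarrow> bool" where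
  "cp_factorization A cols \<longleftrightarrow>
     (\<forall>b\<in>set cols. nonneg_vec b) \<and>
     (\<forall>i<length cols. \<forall>j<length cols. i \<noteq> j \<longrightarrow> lin_indep_pair (cols!i) (cols!j)) \<and>
     A = gram cols"

definition sym_mat :: "real^'n^'n \<Rightarrow> bool" where
  "sym_mat A \<longleftrightarrow> transpose A = A"

definition CP :: "(real^'n^'n) set" where
  "CP = {A. \<exists>cols. (\<forall>b\<in>set cols. nonneg_vec b) \<and> A = gram cols}"

definition Sym :: "(real^'n^'n) set" where
  "Sym = {A. sym_mat A}"

definition CP_interior :: "(real^'n^'n) set" where
  "CP_interior = (top_of_set Sym) interior_of CP"

text \<open>Two factorizations are identified iff their column lists are permutations of each
  other, i.e. have the same multiset of columns.\<close>
definition cp_factorizations :: "real^'n^'n \<Rightarrow> (real^'n) multiset set" where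
  "cp_factorizations A = {mset cols | cols. cp_factorization A cols}"

end

theory Submission
  imports Defs
begin

lemma outer_scale: "outer (r *\<^sub>R v) = (r^2) *\<^sub>R outer (v::real^'n)"
  by (simp add: outer_def vec_eq_iff power2_eq_square algebra_simps)

lemma outer_zero: "outer (0::real^'n) = 0"
  by (simp add: outer_def vec_eq_iff)

lemma lip_sym: "lin_indep_pair u v \<Longrightarrow> lin_indep_pair v u"
  unfolding lin_indep_pair_def by (metis add.commute)

lemma lip_self: "\<not> lin_indep_pair b b"
proof
  assume h: "lin_indep_pair b b"
  have "1 *\<^sub>R b + (-1) *\<^sub>R b = 0" by simp
  with h show False unfolding lin_indep_pair_def by fastforce
qed

lemma lip_scale:
  assumes "k \<noteq> 0" "lin_indep_pair u v"
  shows "lin_indep_pair (k *\<^sub>R u) v"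
  unfolding lin_indep_pair_def
proof (intro allI impI)
  fix a b :: real assume "a *\<^sub>R k *\<^sub>R u + b *\<^sub>R v = 0"
  hence "(a*k) *\<^sub>R u + b *\<^sub>R v = 0" by simp
  with assms(2) have "a*k = 0 \<and> b = 0" unfolding lin_indep_pair_def by blast
  with assms(1) show "a = 0 \<and> b = 0" by simp
qed

lemma parallel:
  fixes b c :: "real^'n"
  assumes "nonneg_vec b" "nonneg_vec c" "b \<noteq> 0" "c \<noteq> 0" "\<not> lin_indep_pair b c"
  shows "\<exists>r>0. c = r *\<^sub>R b"
proof -
  obtain a d where ad: "a *\<^sub>R b + d *\<^sub>R c = 0" "\<not> (a = 0 \<and> d = 0)"
    using assms(5) unfolding lin_indep_pair_def by blast
  have "d \<noteq> 0" using ad assms(3) by auto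
  have "d *\<^sub>R c = - (a *\<^sub>R b)" using ad(1) by (simp add: eq_neg_iff_add_eq_0 add.commute)
  hence "(1/d) *\<^sub>R (d *\<^sub>R c) = (1/d) *\<^sub>R (- (a *\<^sub>R b))" by simp
  hence ceq0: "c = (-a/d) *\<^sub>R b" using \<open>d \<noteq> 0\<close> by simp
  define r where "r = -a/d"
  have ceq: "c = r *\<^sub>R b" using ceq0 r_def by simp
  obtain i where "b$i \<noteq> 0" using assms(3) by (metis vec_eq_iff zero_index)
  hence bi: "b$i > 0" using assms(1) unfolding nonneg_vec_def by (metis less_eq_real_def)
  have "c$i \<ge> 0" using assms(2) unfolding nonneg_vec_def by blast
  moreover have "c$i = r * b$i" using ceq by simp
  ultimately have "r * b$i \<ge> 0" by simp
  hence "r \<ge> 0" using bi by (simp add: zero_le_mult_iff)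
  moreover have "r \<noteq> 0" proof assume "r = 0" hence "c = 0" using ceq by simp thus False using assms(4) by simp qed
  ultimately show ?thesis using ceq by (intro exI[of _ r]) auto
qed

lemma gram_Cons: "gram (b # L) = outer b + gram L"
  by (simp add: gram_def)

lemma gram_append: "gram (L @ M) = gram L + gram M"
  by (simp add: gram_def)


lemma normalize:
  fixes L :: "(real^'n) list"
  assumes "\<forall>b\<in>set L. nonneg_vec b"
  shows "\<exists>S. finite S \<and> (\<forall>x\<in>S. nonneg_vec x \<and> x \<noteq> 0)
    \<and> (\<forall>x\<in>S. \<forall>y\<in>S. x \<noteq> y \<longrightarrow> lin_indep_pair x y) \<and> sum outer S = gram L
    \<and> (\<forall>b\<in>set L. b \<noteq> 0 \<longrightarrow> (\<exists>c\<in>S. \<exists>r>0. c = r *\<^sub>R b))"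
  using assms
proof (induction L)
  case Nil
  show ?case by (intro exI[of _ "{}"]) (simp add: gram_def)
next
  case (Cons b L)
  then obtain S where fin: "finite S" and nn: "\<forall>x\<in>S. nonneg_vec x \<and> x \<noteq> 0"
    and pw: "\<forall>x\<in>S. \<forall>y\<in>S. x \<noteq> y \<longrightarrow> lin_indep_pair x y" and sm: "sum outer S = gram L"
    and wit: "\<forall>b\<in>set L. b \<noteq> 0 \<longrightarrow> (\<exists>c\<in>S. \<exists>r>0. c = r *\<^sub>R b)"
    by auto
  have bnn: "nonneg_vec b" using Cons.prems by simp
  show ?case
  proof (cases "b = 0")
    case True
    show ?thesis
      by (rule exI[of _ S]) (use fin nn pw sm wit True in \<open>auto simp: gram_Cons outer_zero\<close>)
  next
    case bnz: False
    show ?thesis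
    proof (cases "\<exists>c\<in>S. \<not> lin_indep_pair b c")
      case True
      then obtain c where cS: "c \<in> S" and nc: "\<not> lin_indep_pair b c" by blast
      obtain r where r0: "r > 0" and ceq: "c = r *\<^sub>R b"
        using parallel[OF bnn _ bnz _ nc] nn cS by auto
      define s where "s = sqrt (1 + r^2)"
      have s0: "s > 0" unfolding s_def by (simp add: add_pos_nonneg)
      have s2: "s^2 = 1 + r^2" unfolding s_def by (simp add: add_nonneg_nonneg)
      have sbc: "s *\<^sub>R b = (s/r) *\<^sub>R c" using ceq r0 by simp
      have indep: "lin_indep_pair (s *\<^sub>R b) y" if "y \<in> S" "y \<noteq> c" for y
      proof -
        have "lin_indep_pair c y" using that by (intro pw[rule_format] cS) auto
        hence "lin_indep_pair ((s/r) *\<^sub>R c) y" by (rule lip_scale[rotated]) (use s0 r0 in simp)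
        thus ?thesis using sbc by simp
      qed
      have notin: "s *\<^sub>R b \<notin> S - {c}"
      proof
        assume h: "s *\<^sub>R b \<in> S - {c}"
        hence "lin_indep_pair (s *\<^sub>R b) c" by (intro pw[rule_format] cS) auto
        hence "lin_indep_pair ((r/s) *\<^sub>R (s *\<^sub>R b)) c"
          by (rule lip_scale[rotated]) (use s0 r0 in simp)
        moreover have "(r/s) *\<^sub>R (s *\<^sub>R b) = c" using ceq s0 by simp
        ultimately show False using lip_self[of c] by metis
      qed
      define S' where "S' = insert (s *\<^sub>R b) (S - {c})"
      have "sum outer S' = outer (s *\<^sub>R b) + sum outer (S - {c})"
        unfolding S'_def using fin notin by simp
      also have "sum outer (S - {c}) = sum outer S - outer c"
        using fin cS by (simp add: sum_diff1)
      also have "outer (s *\<^sub>R b) = (1 + r^2) *\<^sub>R outer b" by (simp add: outer_scale s2)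
      also have "outer c = r^2 *\<^sub>R outer b" by (simp add: outer_scale ceq)
      finally have "sum outer S' = outer b + sum outer S" by (simp add: algebra_simps)
      hence smS': "sum outer S' = gram (b # L)" by (simp add: sm gram_Cons)
      have sbnn: "nonneg_vec (s *\<^sub>R b)" using bnn s0 unfolding nonneg_vec_def by simp
      have sbnz: "s *\<^sub>R b \<noteq> 0" using s0 bnz by simp
      have pwS': "\<forall>x\<in>S'. \<forall>y\<in>S'. x \<noteq> y \<longrightarrow> lin_indep_pair x y"
        unfolding S'_def using pw indep lip_sym by (auto intro: lip_sym indep)
      have witS': "\<forall>b'\<in>set (b # L). b' \<noteq> 0 \<longrightarrow> (\<exists>c'\<in>S'. \<exists>r'>0. c' = r' *\<^sub>R b')"
      proof (intro ballI impI)
        fix b' assume b': "b' \<in> set (b # L)" "b' \<noteq> 0"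
        show "\<exists>c'\<in>S'. \<exists>r'>0. c' = r' *\<^sub>R b'"
        proof (cases "b' = b")
          case True thus ?thesis using s0 unfolding S'_def by blast
        next
          case False
          hence "b' \<in> set L" using b' by simp
          then obtain c' r' where c': "c' \<in> S" "r' > 0" "c' = r' *\<^sub>R b'" using wit b' by blast
          show ?thesis
          proof (cases "c' = c")
            case True
            have "s *\<^sub>R b = ((s/r) * r') *\<^sub>R b'" using sbc c' True by simp
            moreover have "(s/r) * r' > 0" using s0 r0 c' by simp
            ultimately show ?thesis unfolding S'_def by blast
          next
            case False thus ?thesis using c' unfolding S'_def by blast
          qed
        qed
      qed
      show ?thesis
        by (rule exI[of _ S']) (use fin nn sbnn sbnz pwS' smS' witS' in \<open>auto simp: S'_def\<close>)
    next
      case False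
      hence ind: "\<forall>c\<in>S. lin_indep_pair b c" by blast
      have bS: "b \<notin> S" using ind lip_self by blast
      have "sum outer (insert b S) = gram (b # L)" using fin bS sm by (simp add: gram_Cons)
      moreover have "\<forall>x\<in>insert b S. \<forall>y\<in>insert b S. x \<noteq> y \<longrightarrow> lin_indep_pair x y"
        using pw ind by (auto intro: lip_sym)
      moreover have "\<forall>b'\<in>set (b # L). b' \<noteq> 0 \<longrightarrow> (\<exists>c'\<in>insert b S. \<exists>r'>0. c' = r' *\<^sub>R b')"
        using wit by (auto intro: exI[of _ 1])
      ultimately show ?thesis using fin nn bnn bnz by (intro exI[of _ "insert b S"]) auto
    qed
  qed
qed


lemma sym_mat_iff: "sym_mat (X::real^'n^'n) \<longleftrightarrow> (\<forall>i j. X$i$j = X$j$i)"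
  unfolding sym_mat_def transpose_def by (auto simp: vec_eq_iff)

lemma outer_sym: "sym_mat (outer v)"
  unfolding sym_mat_iff outer_def by (simp add: mult.commute)

lemma list_factorization:
  fixes L :: "(real^'n) list"
  assumes "\<forall>b\<in>set L. nonneg_vec b" "A = gram L" "v \<in> set L" "v \<noteq> 0"
  shows "\<exists>m\<in>cp_factorizations A. \<exists>c. c \<in># m \<and> (\<exists>r>0. c = r *\<^sub>R v)"
proof -
  obtain S where fin: "finite S" and nn: "\<forall>x\<in>S. nonneg_vec x \<and> x \<noteq> 0"
    and pw: "\<forall>x\<in>S. \<forall>y\<in>S. x \<noteq> y \<longrightarrow> lin_indep_pair x y" and sm: "sum outer S = gram L"
    and wit: "\<forall>b\<in>set L. b \<noteq> 0 \<longrightarrow> (\<exists>c\<in>S. \<exists>r>0. c = r *\<^sub>R b)"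
    using normalize[OF assms(1)] by blast
  obtain xs where xs: "set xs = S" "distinct xs" using finite_distinct_list[OF fin] by blast
  have "cp_factorization A xs"
    unfolding cp_factorization_def
  proof (intro conjI allI impI)
    show "\<forall>b\<in>set xs. nonneg_vec b" using xs nn by blast
    fix i j assume ij: "i < length xs" "j < length xs" "i \<noteq> j"
    have "xs ! i \<noteq> xs ! j" using xs(2) ij by (simp add: nth_eq_iff_index_eq)
    moreover have "xs ! i \<in> S" "xs ! j \<in> S" using ij xs(1) by auto
    ultimately show "lin_indep_pair (xs ! i) (xs ! j)" using pw by blast
  next
    show "A = gram xs" using assms(2) sm xs
      by (simp add: gram_def sum_list_distinct_conv_sum_set)
  qed
  hence "mset xs \<in> cp_factorizations A" unfolding cp_factorizations_def by blast
  moreover obtain c r where c: "c \<in> S" "r > 0" "c = r *\<^sub>R v" using wit assms(3,4) by blast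
  ultimately show ?thesis
    by (intro bexI[of _ "mset xs"] exI[of _ c]) (use c xs(1) in auto)
qed


theorem corollary3p3:
  fixes A :: "real^'n^'n"
  assumes "CARD('n) \<ge> 2"
    and "A \<in> CP_interior"
  shows "infinite (cp_factorizations A)"
proof
  assume finF: "finite (cp_factorizations A)"
  obtain U where U: "openin (top_of_set Sym) U" "A \<in> U" "U \<subseteq> CP"
    using assms(2) unfolding CP_interior_def interior_of_def by blast
  obtain T where T: "open T" "U = Sym \<inter> T" using U(1) unfolding openin_open by blast
  have ASym: "A \<in> Sym" and AT: "A \<in> T" using U(2) T(2) by auto
  obtain e where e: "e > 0" "ball A e \<subseteq> T" using T(1) AT open_contains_ball by blast
  obtain i :: 'n where True by blast
  have "UNIV - {i} \<noteq> {}"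
  proof
    assume "UNIV - {i} = {}"
    hence "(UNIV::'n set) = {i}" by blast
    hence "CARD('n) = 1" by (metis card.empty card_insert_disjoint empty_iff finite.emptyI One_nat_def)
    thus False using assms(1) by simp
  qed
  then obtain j where ij: "j \<noteq> i" by blast
  define u :: "real \<Rightarrow> real^'n" where "u t = (\<chi> k. if k = i then 1 else if k = j then t else 0)" for t
  have ui: "u t $ i = 1" and uj: "u t $ j = t" for t using ij by (auto simp: u_def)
  have key: "\<exists>m\<in>cp_factorizations A. \<exists>c. c \<in># m \<and> (\<exists>r>0. c = r *\<^sub>R u t)" if t0: "t > 0" for t
  proof -
    define M where "M = outer (u t)"
    define d where "d = e / (2 * (norm M + 1))"
    have d0: "d > 0" using e(1) unfolding d_def by (simp add: add_nonneg_pos)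
    have "d * norm M < e"
    proof -
      have "d * norm M \<le> d * (norm M + 1)" using d0 by simp
      also have "\<dots> = e / 2" proof -
        have "norm M + 1 > 0" by (simp add: add_nonneg_pos)
        thus ?thesis unfolding d_def by (simp add: field_simps)
      qed
      finally show ?thesis using e(1) by simp
    qed
    hence "A - d *\<^sub>R M \<in> ball A e" using d0 by (simp add: dist_norm)
    hence inT: "A - d *\<^sub>R M \<in> T" using e(2) by blast
    have "sym_mat (A - d *\<^sub>R M)" using ASym outer_sym[of "u t"]
      unfolding Sym_def M_def sym_mat_iff by simp
    hence "A - d *\<^sub>R M \<in> U" using inT T(2) unfolding Sym_def by blast
    hence "A - d *\<^sub>R M \<in> CP" using U(3) by blast
    then obtain cols where cols: "\<forall>b\<in>set cols. nonneg_vec b" "A - d *\<^sub>R M = gram cols"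
      unfolding CP_def by blast
    define v where "v = sqrt d *\<^sub>R u t"
    have vnn: "nonneg_vec v" using t0 d0 unfolding v_def nonneg_vec_def u_def by auto
    have vnz: "v \<noteq> 0"
    proof
      assume "v = 0" hence "v $ i = 0" by simp
      thus False using d0 ui unfolding v_def by simp
    qed
    have "outer v = d *\<^sub>R M" unfolding v_def M_def using d0 by (simp add: outer_scale)
    hence gA: "A = gram (cols @ [v])" using cols(2) by (simp add: gram_append gram_def algebra_simps)
    obtain m c r where m: "m \<in> cp_factorizations A" "c \<in># m" "r > 0" "c = r *\<^sub>R v"
      using list_factorization[OF _ gA, of v] cols(1) vnn vnz by auto
    have "c = (r * sqrt d) *\<^sub>R u t" using m(4) unfolding v_def by simp
    moreover have "r * sqrt d > 0" using m(3) d0 by simp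
    ultimately show ?thesis using m(1,2) by blast
  qed
  define D where "D = (\<Union>m\<in>cp_factorizations A. set_mset m)"
  have finD: "finite D" unfolding D_def using finF by auto
  have "{0<..} \<subseteq> (\<lambda>c. c$j / c$i) ` D"
  proof
    fix t :: real assume "t \<in> {0<..}"
    then obtain m c r where mc: "m \<in> cp_factorizations A" "c \<in># m" "r > 0" "c = r *\<^sub>R u t"
      using key by force
    have "c$j / c$i = t" using mc(3,4) ui uj by simp
    moreover have "c \<in> D" using mc(1,2) unfolding D_def by blast
    ultimately show "t \<in> (\<lambda>c. c$j / c$i) ` D" by force
  qed
  hence "finite ({0<..} :: real set)" using finD finite_subset by blast
  thus False using infinite_Ioi by blast
qed

end
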